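(* If $G$ and $H$ are connected graphs, then $\mathrm{gp}(G\boxtimes H)\le \min\{n(G)\,\mathrm{gp}(H),\ n(H)\,\mathrm{gp}(G)\}$.
   Context: All graphs are finite and simple; $n(G)=|V(G)|$. The strong product $G\boxtimes H$ has vertex set $V(G)\times V(H)$, with distinct $(g,h),(g',h')$ adjacent iff ($g=g'$ or $gg'\in E(G)$) and ($h=h'$ or $hh'\in E(H)$). For a connected graph $G$, a set $S\subseteq V(G)$ is a general position set if no three pairwise distinct vertices of $S$ lie on a common geodesic (shortest path); $\mathrm{gp}(G)$ is the maximum cardinality of a general position set. *)

theory Defs
  imports Main
begin

definition simple_graph :: "'a set \<Rightarrow> ('a \<Rightarrow> 'a \<Rightarrow> bool) \<Rightarrow> bool" where
  "simple_graph V E \<longleftrightarrow> finite V \<and> V \<noteq> {} \<and>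
     (\<forall>x y. E x y \<longrightarrow> x \<in> V \<and> y \<in> V) \<and>
     (\<forall>x y. E x y \<longrightarrow> E y x) \<and> (\<forall>x. \<not> E x x)"

definition walk :: "'a set \<Rightarrow> ('a \<Rightarrow> 'a \<Rightarrow> bool) \<Rightarrow> 'a list \<Rightarrow> bool" where
  "walk V E p \<longleftrightarrow> p \<noteq> [] \<and> set p \<subseteq> V \<and>
     (\<forall>i. Suc i < length p \<longrightarrow> E (p ! i) (p ! Suc i))"

definition walk_betw :: "'a set \<Rightarrow> ('a \<Rightarrow> 'a \<Rightarrow> bool) \<Rightarrow> 'a \<Rightarrow> 'a list \<Rightarrow> 'a \<Rightarrow> bool" where
  "walk_betw V E x p y \<longleftrightarrow> walk V E p \<and> hd p = x \<and> last p = y"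

definition connected_graph :: "'a set \<Rightarrow> ('a \<Rightarrow> 'a \<Rightarrow> bool) \<Rightarrow> bool" where
  "connected_graph V E \<longleftrightarrow> simple_graph V E \<and>
     (\<forall>x\<in>V. \<forall>y\<in>V. \<exists>p. walk_betw V E x p y)"

definition gdist :: "'a set \<Rightarrow> ('a \<Rightarrow> 'a \<Rightarrow> bool) \<Rightarrow> 'a \<Rightarrow> 'a \<Rightarrow> nat" where
  "gdist V E x y = (LEAST n. \<exists>p. walk_betw V E x p y \<and> length p = Suc n)"

definition geodesic :: "'a set \<Rightarrow> ('a \<Rightarrow> 'a \<Rightarrow> bool) \<Rightarrow> 'a list \<Rightarrow> bool" where
  "geodesic V E p \<longleftrightarrow> walk V E p \<and> length p = Suc (gdist V E (hd p) (last p))"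

definition general_position :: "'a set \<Rightarrow> ('a \<Rightarrow> 'a \<Rightarrow> bool) \<Rightarrow> 'a set \<Rightarrow> bool" where
  "general_position V E S \<longleftrightarrow> S \<subseteq> V \<and>
     (\<forall>u\<in>S. \<forall>v\<in>S. \<forall>w\<in>S. u \<noteq> v \<and> v \<noteq> w \<and> u \<noteq> w \<longrightarrow>
        \<not> (\<exists>p. geodesic V E p \<and> u \<in> set p \<and> v \<in> set p \<and> w \<in> set p))"

definition gp :: "'a set \<Rightarrow> ('a \<Rightarrow> 'a \<Rightarrow> bool) \<Rightarrow> nat" where
  "gp V E = Max {card S | S. general_position V E S}"

definition strong_prod_adj ::
  "('a \<Rightarrow> 'a \<Rightarrow> bool) \<Rightarrow> ('b \<Rightarrow> 'b \<Rightarrow> bool) \<Rightarrow> 'a \<times> 'b \<Rightarrow> 'a \<times> 'b \<Rightarrow> bool" where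
  "strong_prod_adj E F u v \<longleftrightarrow> u \<noteq> v \<and>
     (fst u = fst v \<or> E (fst u) (fst v)) \<and> (snd u = snd v \<or> F (snd u) (snd v))"

end

theory Submission
  imports Defs
begin

lemma walk_single: "walk V E [x] \<longleftrightarrow> x \<in> V"
  unfolding walk_def by auto

lemma walk_Cons2: "walk V E (x#y#r) \<longleftrightarrow> x \<in> V \<and> E x y \<and> walk V E (y#r)"
proof
  assume h: "walk V E (x#y#r)"
  have "\<forall>i. Suc i < length (y#r) \<longrightarrow> E ((y#r) ! i) ((y#r) ! Suc i)"
  proof (intro allI impI)
    fix i assume "Suc i < length (y#r)"
    then have "Suc (Suc i) < length (x#y#r)" by simp
    then have "E ((x#y#r) ! Suc i) ((x#y#r) ! Suc (Suc i))" using h unfolding walk_def by blast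
    then show "E ((y#r) ! i) ((y#r) ! Suc i)" by simp
  qed
  moreover have "E ((x#y#r) ! 0) ((x#y#r) ! Suc 0)" using h unfolding walk_def by force
  ultimately show "x \<in> V \<and> E x y \<and> walk V E (y#r)" using h unfolding walk_def by auto
next
  assume h: "x \<in> V \<and> E x y \<and> walk V E (y#r)"
  show "walk V E (x#y#r)" unfolding walk_def
  proof (intro conjI allI impI)
    show "x # y # r \<noteq> []" by simp
    show "set (x # y # r) \<subseteq> V" using h unfolding walk_def by auto
    fix i assume i: "Suc i < length (x # y # r)"
    show "E ((x # y # r) ! i) ((x # y # r) ! Suc i)"
    proof (cases i)
      case 0 then show ?thesis using h by simp
    next
      case (Suc j)
      then have "Suc j < length (y#r)" using i by simp
      then have "E ((y#r) ! j) ((y#r) ! Suc j)" using h unfolding walk_def by blast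
      then show ?thesis using Suc by simp
    qed
  qed
qed

lemma walk_proj:
  assumes pW: "\<forall>u\<in>U. \<pi> u \<in> W"
    and pA: "\<forall>u v. A u v \<longrightarrow> \<pi> u = \<pi> v \<or> F (\<pi> u) (\<pi> v)"
  shows "walk U A p \<Longrightarrow> \<exists>q. walk W F q \<and> hd q = \<pi> (hd p) \<and> last q = \<pi> (last p) \<and> length q \<le> length p"
proof (induction p)
  case Nil then show ?case by (simp add: walk_def)
next
  case (Cons x r)
  show ?case
  proof (cases r)
    case Nil
    then have "x \<in> U" using Cons.prems by (simp add: walk_single)
    then show ?thesis using Nil pW by (intro exI[of _ "[\<pi> x]"]) (simp add: walk_single)
  next
    case (Cons y r')
    have w: "x \<in> U" "A x y" "walk U A r" using Cons.prems \<open>r = y # r'\<close> walk_Cons2 by metis+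
    obtain q where q: "walk W F q" "hd q = \<pi> (hd r)" "last q = \<pi> (last r)" "length q \<le> length r"
      using Cons.IH w(3) by blast
    have qne: "q \<noteq> []" using q(1) by (simp add: walk_def)
    show ?thesis
    proof (cases "\<pi> x = \<pi> y")
      case True
      then show ?thesis using q Cons by (intro exI[of _ q]) auto
    next
      case False
      then have "F (\<pi> x) (hd q)" using pA w q(2) Cons by auto
      moreover have "\<pi> x \<in> W" using pW w by auto
      ultimately have "walk W F (\<pi> x # q)"
        using q(1) qne walk_Cons2[of W F "\<pi> x" "hd q" "tl q"] by simp
      then show ?thesis using q Cons qne by (intro exI[of _ "\<pi> x # q"]) auto
    qed
  qed
qed

lemma walk_lift:
  assumes iU: "\<forall>a\<in>W. \<iota> a \<in> U"
    and iA: "\<forall>a b. F a b \<longrightarrow> A (\<iota> a) (\<iota> b)"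
  shows "walk W F q \<Longrightarrow> walk U A (map \<iota> q)"
proof (induction q)
  case Nil then show ?case by (simp add: walk_def)
next
  case (Cons x r)
  show ?case
  proof (cases r)
    case Nil then show ?thesis using Cons iU by (simp add: walk_single)
  next
    case (Cons y r')
    have w: "x \<in> W" "F x y" "walk W F r" using Cons.prems \<open>r = y # r'\<close> walk_Cons2 by metis+
    have "walk U A (map \<iota> r)" using Cons.IH w(3) by blast
    then have "walk U A (\<iota> y # map \<iota> r')" using \<open>r = y # r'\<close> by simp
    moreover have "\<iota> x \<in> U" "A (\<iota> x) (\<iota> y)" using w iU iA by auto
    ultimately have "walk U A (\<iota> x # \<iota> y # map \<iota> r')" using walk_Cons2 by metis
    then show ?thesis using \<open>r = y # r'\<close> by simp
  qed
qed

lemma geodesic_lift: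
  assumes pW: "\<forall>u\<in>U. \<pi> u \<in> W"
    and pA: "\<forall>u v. A u v \<longrightarrow> \<pi> u = \<pi> v \<or> F (\<pi> u) (\<pi> v)"
    and iU: "\<forall>a\<in>W. \<iota> a \<in> U"
    and iA: "\<forall>a b. F a b \<longrightarrow> A (\<iota> a) (\<iota> b)"
    and pi: "\<forall>a\<in>W. \<pi> (\<iota> a) = a"
    and g: "geodesic W F q"
  shows "geodesic U A (map \<iota> q)"
proof -
  have wq: "walk W F q" and lq: "length q = Suc (gdist W F (hd q) (last q))"
    using g by (auto simp: geodesic_def)
  have qne: "q \<noteq> []" using wq by (simp add: walk_def)
  have hdW: "hd q \<in> W" "last q \<in> W" using wq qne unfolding walk_def by auto
  have wl: "walk U A (map \<iota> q)" using walk_lift[OF iU iA wq] .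
  have hl: "hd (map \<iota> q) = \<iota> (hd q)" "last (map \<iota> q) = \<iota> (last q)"
    using qne by (auto simp: hd_map last_map)
  define P where "P = (\<lambda>n. \<exists>p. walk_betw U A (\<iota> (hd q)) p (\<iota> (last q)) \<and> length p = Suc n)"
  have Pd: "P (gdist W F (hd q) (last q))"
    unfolding P_def walk_betw_def using wl hl lq by (intro exI[of _ "map \<iota> q"]) simp
  have du: "gdist U A (\<iota> (hd q)) (\<iota> (last q)) = (LEAST n. P n)"
    unfolding gdist_def P_def by simp
  have le1: "(LEAST n. P n) \<le> gdist W F (hd q) (last q)" using Pd by (rule Least_le)
  have "P (LEAST n. P n)" using Pd by (rule LeastI)
  then obtain p where p: "walk U A p" "hd p = \<iota> (hd q)" "last p = \<iota> (last q)"
      "length p = Suc (LEAST n. P n)" unfolding P_def walk_betw_def by blast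
  obtain r where r: "walk W F r" "hd r = \<pi> (hd p)" "last r = \<pi> (last p)" "length r \<le> length p"
    using walk_proj[OF pW pA p(1)] by blast
  have rne: "r \<noteq> []" using r(1) by (simp add: walk_def)
  then obtain m where m: "length r = Suc m" by (cases r) auto
  have "walk_betw W F (hd q) r (last q)"
    unfolding walk_betw_def using r p pi hdW by simp
  then have "gdist W F (hd q) (last q) \<le> m"
    unfolding gdist_def using m by (intro Least_le) blast
  then have "gdist W F (hd q) (last q) \<le> (LEAST n. P n)" using m r(4) p(4) by simp
  then have "gdist U A (\<iota> (hd q)) (\<iota> (last q)) = gdist W F (hd q) (last q)"
    using le1 du by simp
  then show ?thesis unfolding geodesic_def using wl hl lq by simp
qed

lemma gp_fiber:
  assumes pW: "\<forall>u\<in>U. \<pi> u \<in> W"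
    and pA: "\<forall>u v. A u v \<longrightarrow> \<pi> u = \<pi> v \<or> F (\<pi> u) (\<pi> v)"
    and iU: "\<forall>a\<in>W. \<iota> a \<in> U"
    and iA: "\<forall>a b. F a b \<longrightarrow> A (\<iota> a) (\<iota> b)"
    and pi: "\<forall>a\<in>W. \<pi> (\<iota> a) = a"
    and S: "general_position U A S"
  shows "general_position W F {b\<in>W. \<iota> b \<in> S}"
  unfolding general_position_def
proof (intro conjI ballI impI)
  show "{b \<in> W. \<iota> b \<in> S} \<subseteq> W" by auto
  fix u v w assume uvw: "u \<in> {b \<in> W. \<iota> b \<in> S}" "v \<in> {b \<in> W. \<iota> b \<in> S}" "w \<in> {b \<in> W. \<iota> b \<in> S}"
    and d: "u \<noteq> v \<and> v \<noteq> w \<and> u \<noteq> w"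
  show "\<not> (\<exists>p. geodesic W F p \<and> u \<in> set p \<and> v \<in> set p \<and> w \<in> set p)"
  proof
    assume "\<exists>p. geodesic W F p \<and> u \<in> set p \<and> v \<in> set p \<and> w \<in> set p"
    then obtain p where p: "geodesic W F p" "u \<in> set p" "v \<in> set p" "w \<in> set p" by blast
    have g: "geodesic U A (map \<iota> p)" using geodesic_lift[OF pW pA iU iA pi p(1)] .
    have inj: "\<And>a b. a \<in> W \<Longrightarrow> b \<in> W \<Longrightarrow> \<iota> a = \<iota> b \<Longrightarrow> a = b"
      using pi by metis
    have uW: "u \<in> W" "v \<in> W" "w \<in> W" using uvw by auto
    have d2: "\<iota> u \<noteq> \<iota> v" "\<iota> v \<noteq> \<iota> w" "\<iota> u \<noteq> \<iota> w"
      using d inj[OF uW(1) uW(2)] inj[OF uW(2) uW(3)] inj[OF uW(1) uW(3)] by auto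
    have m: "\<iota> u \<in> set (map \<iota> p)" "\<iota> v \<in> set (map \<iota> p)" "\<iota> w \<in> set (map \<iota> p)"
      using p by auto
    have s: "\<iota> u \<in> S" "\<iota> v \<in> S" "\<iota> w \<in> S" using uvw by auto
    have GP: "\<And>a b c. a \<in> S \<Longrightarrow> b \<in> S \<Longrightarrow> c \<in> S \<Longrightarrow> a \<noteq> b \<Longrightarrow> b \<noteq> c \<Longrightarrow> a \<noteq> c
       \<Longrightarrow> \<not> (\<exists>p. geodesic U A p \<and> a \<in> set p \<and> b \<in> set p \<and> c \<in> set p)"
      using S unfolding general_position_def by blast
    show False using GP[OF s d2(1) d2(2) d2(3)] g m by blast
  qed
qed

lemma gp_ge:
  assumes "finite W" "general_position W F T"
  shows "card T \<le> gp W F"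
proof -
  have "{card S | S. general_position W F S} \<subseteq> card ` Pow W"
    unfolding general_position_def by auto
  then have "finite {card S | S. general_position W F S}"
    using assms(1) finite_subset by blast
  then show ?thesis unfolding gp_def using assms(2) by (intro Max_ge) auto
qed

lemma gp_le:
  assumes "finite U" "\<And>S. general_position U A S \<Longrightarrow> card S \<le> k"
  shows "gp U A \<le> k"
proof -
  have "{card S | S. general_position U A S} \<subseteq> card ` Pow U"
    unfolding general_position_def by auto
  then have "finite {card S | S. general_position U A S}"
    using assms(1) finite_subset by blast
  moreover have "general_position U A {}" unfolding general_position_def by auto
  ultimately show ?thesis unfolding gp_def using assms(2) by (subst Max_le_iff) auto
qed

theorem corollary4p1:
  fixes V :: "'a set" and E :: "'a \<Rightarrow> 'a \<Rightarrow> bool"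
    and W :: "'b set" and F :: "'b \<Rightarrow> 'b \<Rightarrow> bool"
  assumes "connected_graph V E" and "connected_graph W F"
  shows "gp (V \<times> W) (strong_prod_adj E F)
           \<le> min (card V * gp W F) (card W * gp V E)"
proof -
  have sV: "simple_graph V E" and sW: "simple_graph W F"
    using assms by (auto simp: connected_graph_def)
  have fV: "finite V" and fW: "finite W" using sV sW by (auto simp: simple_graph_def)
  have irrE: "\<And>x. \<not> E x x" and irrF: "\<And>x. \<not> F x x"
    using sV sW by (auto simp: simple_graph_def)
  have A1: "card S \<le> card V * gp W F" if S: "general_position (V \<times> W) (strong_prod_adj E F) S" for S
  proof -
    define T where "T = (\<lambda>g. {b\<in>W. (g,b) \<in> S})"
    have gT: "general_position W F (T g)" if g: "g \<in> V" for g
      unfolding T_def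
      by (rule gp_fiber[where \<pi>=snd and U="V \<times> W" and A="strong_prod_adj E F" and \<iota>="\<lambda>b. (g,b)"])
         (use g S irrF in \<open>auto simp: strong_prod_adj_def\<close>)
    have "S \<subseteq> (\<Union>g\<in>V. (\<lambda>b. (g,b)) ` T g)" using S unfolding general_position_def T_def by auto
    then have "card S \<le> card (\<Union>g\<in>V. (\<lambda>b. (g,b)) ` T g)"
      using fV fW by (intro card_mono) (auto simp: T_def)
    also have "\<dots> \<le> (\<Sum>g\<in>V. card ((\<lambda>b. (g,b)) ` T g))" by (rule card_UN_le[OF fV])
    also have "\<dots> \<le> (\<Sum>g\<in>V. gp W F)"
    proof (rule sum_mono)
      fix g assume g: "g \<in> V"
      have "card ((\<lambda>b. (g,b)) ` T g) \<le> card (T g)" by (rule card_image_le) (auto simp: T_def fW)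
      also have "\<dots> \<le> gp W F" using gp_ge[OF fW gT[OF g]] .
      finally show "card ((\<lambda>b. (g,b)) ` T g) \<le> gp W F" .
    qed
    finally show ?thesis by simp
  qed
  have A2: "card S \<le> card W * gp V E" if S: "general_position (V \<times> W) (strong_prod_adj E F) S" for S
  proof -
    define T where "T = (\<lambda>h. {a\<in>V. (a,h) \<in> S})"
    have gT: "general_position V E (T h)" if h: "h \<in> W" for h
      unfolding T_def
      by (rule gp_fiber[where \<pi>=fst and U="V \<times> W" and A="strong_prod_adj E F" and \<iota>="\<lambda>a. (a,h)"])
         (use h S irrE in \<open>auto simp: strong_prod_adj_def\<close>)
    have "S \<subseteq> (\<Union>h\<in>W. (\<lambda>a. (a,h)) ` T h)" using S unfolding general_position_def T_def by auto
    then have "card S \<le> card (\<Union>h\<in>W. (\<lambda>a. (a,h)) ` T h)"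
      using fV fW by (intro card_mono) (auto simp: T_def)
    also have "\<dots> \<le> (\<Sum>h\<in>W. card ((\<lambda>a. (a,h)) ` T h))" by (rule card_UN_le[OF fW])
    also have "\<dots> \<le> (\<Sum>h\<in>W. gp V E)"
    proof (rule sum_mono)
      fix h assume h: "h \<in> W"
      have "card ((\<lambda>a. (a,h)) ` T h) \<le> card (T h)" by (rule card_image_le) (auto simp: T_def fV)
      also have "\<dots> \<le> gp V E" using gp_ge[OF fV gT[OF h]] .
      finally show "card ((\<lambda>a. (a,h)) ` T h) \<le> gp V E" .
    qed
    finally show ?thesis by simp
  qed
  have "gp (V \<times> W) (strong_prod_adj E F) \<le> card V * gp W F"
    using fV fW A1 by (intro gp_le) auto
  moreover have "gp (V \<times> W) (strong_prod_adj E F) \<le> card W * gp V E"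
    using fV fW A2 by (intro gp_le) auto
  ultimately show ?thesis by simp
qed

end
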